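(* Let $X$ be an $n$-dimensional real Banach space, let $\Sigma$ be an $n$-simplex in $X$ with vertices $a_1,\ldots,a_{n+1}$, and let $c$ be an interior point of $\Sigma$. Then there exists $\delta>0$ such that if $x_1,\ldots,x_{n+1}\in X$ and $\|x_k-a_k\|<\delta$ for each $k\le n+1$, then the convex hull of $x_1,\ldots,x_{n+1}$ is an $n$-simplex with $c$ in its interior.
   Context: The setting is Bishop's constructive mathematics (intuitionistic logic). Vectors $v_1,\ldots,v_n$ are linearly independent if $\|\sum_i\lambda_iv_i\|>0$ whenever $\sum_i|\lambda_i|>0$; points $a_1,\ldots,a_{n+1}$ are affinely independent if $a_k-a_{n+1}$ ($1\le k\le n$) are linearly independent; an $n$-simplex is the convex hull of $n+1$ affinely independent points, called its vertices. An interior point of $S$ is a point $x$ with $\{y:\|y-x\|<r\}\subset S$ for some $r>0$. *)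

theory Defs
  imports "HOL-Analysis.Analysis"
begin

text \<open>Points x 0, ..., x n (paper: x_1..x_{n+1}) are affinely independent as a family:
  pairwise distinct and the set of them is not affinely dependent.\<close>
definition aff_indep_family :: "nat \<Rightarrow> (nat \<Rightarrow> 'a::real_vector) \<Rightarrow> bool" where
  "aff_indep_family n x \<longleftrightarrow> inj_on x {..n} \<and> \<not> affine_dependent (x ` {..n})"

end

theory Submission
  imports Defs "HOL-Analysis.Analysis"
begin

lemma lower_bound:
  fixes v :: "nat \<Rightarrow> 'a::real_normed_vector"
  assumes indep: "\<forall>l. (\<Sum>k<m. l k *\<^sub>R v k) = 0 \<longrightarrow> (\<forall>k<m. l k = 0)"
  shows "\<exists>e>0. \<forall>l. e * (\<Sum>k<m. \<bar>l k\<bar>) \<le> norm (\<Sum>k<m. l k *\<^sub>R v k)"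
proof (cases "m = 0")
  case True then show ?thesis by (intro exI[of _ 1]) auto
next
  case False
  define S :: "(nat \<Rightarrow> real) set" where
    "S = PiE UNIV (\<lambda>i. if i < m then {-1..1} else {0}) \<inter> {f. (\<Sum>k<m. \<bar>f k\<bar>) = 1}"
  have c1: "compact (PiE UNIV (\<lambda>i. if i < m then {-1..1::real} else {0}))"
  proof -
    have "compactin (product_topology (\<lambda>i. euclidean) UNIV) (PiE UNIV (\<lambda>i. if i < m then {-1..1::real} else {0}))"
      by (subst compactin_PiE) auto
    then show ?thesis by (simp add: euclidean_product_topology)
  qed
  have c2: "closed {f::nat\<Rightarrow>real. (\<Sum>k<m. \<bar>f k\<bar>) = 1}"
    by (intro closed_Collect_eq continuous_intros continuous_on_product_coordinates)
  have cS: "compact S" unfolding S_def using c1 c2 by (rule compact_Int_closed)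
  have neS: "S \<noteq> {}"
  proof -
    have "(\<lambda>i. if i = 0 then 1 else 0) \<in> S" using False unfolding S_def
      by (auto simp: PiE_iff sum.If_cases)
    then show ?thesis by blast
  qed
  have cont: "continuous_on S (\<lambda>f. norm (\<Sum>k<m. f k *\<^sub>R v k))"
    by (intro continuous_intros) (auto intro: continuous_on_subset[OF continuous_on_product_coordinates])
  obtain f0 where f0: "f0 \<in> S" and min: "\<And>f. f \<in> S \<Longrightarrow> norm (\<Sum>k<m. f0 k *\<^sub>R v k) \<le> norm (\<Sum>k<m. f k *\<^sub>R v k)"
    using continuous_attains_inf[OF cS neS cont] by blast
  define e where "e = norm (\<Sum>k<m. f0 k *\<^sub>R v k)"
  have "e > 0"
  proof (rule ccontr)
    assume "\<not> e > 0"
    then have "(\<Sum>k<m. f0 k *\<^sub>R v k) = 0" unfolding e_def by simp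
    then have "\<forall>k<m. f0 k = 0" using indep by blast
    then have "(\<Sum>k<m. \<bar>f0 k\<bar>) = 0" by simp
    with f0 show False unfolding S_def by simp
  qed
  moreover have "e * (\<Sum>k<m. \<bar>l k\<bar>) \<le> norm (\<Sum>k<m. l k *\<^sub>R v k)" for l
  proof (cases "(\<Sum>k<m. \<bar>l k\<bar>) = 0")
    case True then show ?thesis by simp
  next
    case nz: False
    define s where "s = (\<Sum>k<m. \<bar>l k\<bar>)"
    have sp: "s > 0" using nz unfolding s_def by (simp add: sum_nonneg order_le_neq_trans)
    define f where "f = (\<lambda>i. if i < m then l i / s else 0)"
    have le1: "\<bar>l i\<bar> \<le> s" if "i < m" for i
      unfolding s_def using that by (intro member_le_sum) auto
    have A: "(\<Sum>k<m. \<bar>f k\<bar>) = 1"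
    proof -
      have "(\<Sum>k<m. \<bar>f k\<bar>) = (\<Sum>k<m. \<bar>l k\<bar> / s)"
        using sp unfolding f_def by (intro sum.cong) auto
      also have "\<dots> = 1" using sp by (simp add: s_def flip: sum_divide_distrib)
      finally show ?thesis .
    qed
    have B: "f i \<in> (if i < m then {-1..1} else {0})" for i
      using le1[of i] sp unfolding f_def by (auto simp: field_simps abs_le_iff)
    have "f \<in> S" unfolding S_def using A B by (auto simp: PiE_iff)
    then have "e \<le> norm (\<Sum>k<m. f k *\<^sub>R v k)" using min unfolding e_def by blast
    also have "(\<Sum>k<m. f k *\<^sub>R v k) = (1/s) *\<^sub>R (\<Sum>k<m. l k *\<^sub>R v k)"
      unfolding f_def scaleR_sum_right by (intro sum.cong) auto
    finally have "e \<le> norm (\<Sum>k<m. l k *\<^sub>R v k) / s" using sp by simp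
    then show ?thesis using sp by (simp add: s_def field_simps)
  qed
  ultimately show ?thesis by blast
qed
lemma aff_indep_iff1:
  "aff_indep_family n x \<longleftrightarrow>
   (\<forall>\<mu>. (\<Sum>k\<le>n. \<mu> k) = 0 \<and> (\<Sum>k\<le>n. \<mu> k *\<^sub>R x k) = 0 \<longrightarrow> (\<forall>k\<le>n. \<mu> k = 0))"
proof
  assume H: "aff_indep_family n x"
  then have inj: "inj_on x {..n}" and nd: "\<not> affine_dependent (x ` {..n})"
    unfolding aff_indep_family_def by auto
  show "\<forall>\<mu>. (\<Sum>k\<le>n. \<mu> k) = 0 \<and> (\<Sum>k\<le>n. \<mu> k *\<^sub>R x k) = 0 \<longrightarrow> (\<forall>k\<le>n. \<mu> k = 0)"
  proof (rule allI, rule impI)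
    fix \<mu> assume A: "(\<Sum>k\<le>n. \<mu> k) = 0 \<and> (\<Sum>k\<le>n. \<mu> k *\<^sub>R x k) = 0"
    define U where "U = (\<lambda>y. \<mu> (the_inv_into {..n} x y))"
    have Ux: "U (x k) = \<mu> k" if "k \<le> n" for k
      unfolding U_def using that inj by (simp add: the_inv_into_f_f)
    have "sum U (x ` {..n}) = (\<Sum>k\<le>n. U (x k))" by (rule sum.reindex[OF inj, unfolded comp_def])
    also have "\<dots> = (\<Sum>k\<le>n. \<mu> k)" by (intro sum.cong) (auto simp: Ux)
    finally have s1: "sum U (x ` {..n}) = 0" using A by simp
    have "(\<Sum>y\<in>x ` {..n}. U y *\<^sub>R y) = (\<Sum>k\<le>n. U (x k) *\<^sub>R x k)"
      by (rule sum.reindex[OF inj, unfolded comp_def])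
    also have "\<dots> = (\<Sum>k\<le>n. \<mu> k *\<^sub>R x k)" by (intro sum.cong) (auto simp: Ux)
    finally have s2: "(\<Sum>y\<in>x ` {..n}. U y *\<^sub>R y) = 0" using A by simp
    have "\<forall>y\<in>x ` {..n}. U y = 0"
      using nd s1 s2 affine_dependent_explicit_finite[of "x ` {..n}"] by auto
    then show "\<forall>k\<le>n. \<mu> k = 0" using Ux by auto
  qed
next
  assume H: "\<forall>\<mu>. (\<Sum>k\<le>n. \<mu> k) = 0 \<and> (\<Sum>k\<le>n. \<mu> k *\<^sub>R x k) = 0 \<longrightarrow> (\<forall>k\<le>n. \<mu> k = 0)"
  have inj: "inj_on x {..n}"
  proof (rule inj_onI, rule ccontr)
    fix i j assume ij: "i \<in> {..n}" "j \<in> {..n}" "x i = x j" "i \<noteq> j"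
    define \<mu> where "\<mu> = (\<lambda>k. (if k = i then 1 else 0) - (if k = j then (1::real) else 0))"
    have "(\<Sum>k\<le>n. \<mu> k) = 0" using ij unfolding \<mu>_def by (simp add: sum_subtractf)
    moreover have "(\<Sum>k\<le>n. \<mu> k *\<^sub>R x k) = 0" using ij unfolding \<mu>_def
      by (simp add: scaleR_diff_left sum_subtractf if_distrib[where f="\<lambda>a. a *\<^sub>R _"] cong: if_cong)
    ultimately have "\<mu> i = 0" using H ij by auto
    then show False using ij unfolding \<mu>_def by simp
  qed
  moreover have "\<not> affine_dependent (x ` {..n})"
  proof
    assume "affine_dependent (x ` {..n})"
    then obtain U where U: "sum U (x ` {..n}) = 0" "\<exists>v\<in>x ` {..n}. U v \<noteq> 0"
       "(\<Sum>y\<in>x ` {..n}. U y *\<^sub>R y) = 0"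
      using affine_dependent_explicit_finite[of "x ` {..n}"] by auto
    have "(\<Sum>k\<le>n. U (x k)) = 0" using U(1) sum.reindex[OF inj, of U] by simp
    moreover have "(\<Sum>k\<le>n. U (x k) *\<^sub>R x k) = 0"
      using U(3) sum.reindex[OF inj, of "\<lambda>y. U y *\<^sub>R y"] by simp
    ultimately have "\<forall>k\<le>n. U (x k) = 0" using H[rule_format, of "\<lambda>k. U (x k)"] by blast
    with U(2) show False by auto
  qed
  ultimately show "aff_indep_family n x" unfolding aff_indep_family_def by auto
qed

lemma aff_indep_iff2:
  "aff_indep_family n x \<longleftrightarrow>
   (\<forall>l. (\<Sum>k<n. l k *\<^sub>R (x (Suc k) - x 0)) = 0 \<longrightarrow> (\<forall>k<n. l k = 0))"
proof
  assume "aff_indep_family n x"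
  then have H: "\<And>\<mu>. (\<Sum>k\<le>n. \<mu> k) = 0 \<Longrightarrow> (\<Sum>k\<le>n. \<mu> k *\<^sub>R x k) = 0 \<Longrightarrow> (\<forall>k\<le>n. \<mu> k = 0)"
    unfolding aff_indep_iff1 by blast
  show "\<forall>l. (\<Sum>k<n. l k *\<^sub>R (x (Suc k) - x 0)) = 0 \<longrightarrow> (\<forall>k<n. l k = 0)"
  proof (rule allI, rule impI)
    fix l assume A: "(\<Sum>k<n. l k *\<^sub>R (x (Suc k) - x 0)) = 0"
    define \<mu> where "\<mu> = (\<lambda>k. case k of 0 \<Rightarrow> - (\<Sum>k<n. l k) | Suc j \<Rightarrow> l j)"
    have "(\<Sum>k\<le>n. \<mu> k) = 0" unfolding sum.atMost_shift \<mu>_def by simp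
    moreover have "(\<Sum>k\<le>n. \<mu> k *\<^sub>R x k) = 0"
    proof -
      have "(\<Sum>k\<le>n. \<mu> k *\<^sub>R x k) = - (\<Sum>k<n. l k) *\<^sub>R x 0 + (\<Sum>k<n. l k *\<^sub>R x (Suc k))"
        unfolding sum.atMost_shift \<mu>_def by simp
      also have "\<dots> = (\<Sum>k<n. l k *\<^sub>R (x (Suc k) - x 0))"
        by (simp add: scaleR_diff_right sum_subtractf scaleR_sum_left)
      finally show ?thesis using A by simp
    qed
    ultimately have "\<forall>k\<le>n. \<mu> k = 0" by (rule H)
    then show "\<forall>k<n. l k = 0" unfolding \<mu>_def
      by (metis Suc_leI nat.simps(5))
  qed
next
  assume H: "\<forall>l. (\<Sum>k<n. l k *\<^sub>R (x (Suc k) - x 0)) = 0 \<longrightarrow> (\<forall>k<n. l k = 0)"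
  show "aff_indep_family n x" unfolding aff_indep_iff1
  proof (rule allI, rule impI)
    fix \<mu> assume A: "(\<Sum>k\<le>n. \<mu> k) = 0 \<and> (\<Sum>k\<le>n. \<mu> k *\<^sub>R x k) = 0"
    have s0: "\<mu> 0 = - (\<Sum>k<n. \<mu> (Suc k))" using A unfolding sum.atMost_shift by simp
    have "(\<Sum>k<n. \<mu> (Suc k) *\<^sub>R (x (Suc k) - x 0)) =
          (\<Sum>k<n. \<mu> (Suc k) *\<^sub>R x (Suc k)) - (\<Sum>k<n. \<mu> (Suc k)) *\<^sub>R x 0"
      by (simp add: scaleR_diff_right sum_subtractf scaleR_sum_left)
    also have "\<dots> = (\<Sum>k\<le>n. \<mu> k *\<^sub>R x k)"
      unfolding sum.atMost_shift using s0 by simp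
    finally have "\<forall>k<n. \<mu> (Suc k) = 0" using A H by auto
    moreover then have "\<mu> 0 = 0" using s0 by simp
    ultimately show "\<forall>k\<le>n. \<mu> k = 0"
      by (metis Suc_le_lessD not0_implies_Suc)
  qed
qed
lemma coords:
  fixes w :: "nat \<Rightarrow> 'a::real_vector" and B :: "'a set"
  assumes B: "finite B" "independent B" "span B = UNIV" "card B = n"
    and ind: "\<forall>l. (\<Sum>k<n. l k *\<^sub>R w k) = 0 \<longrightarrow> (\<forall>k<n. l k = 0)"
  shows "\<exists>\<beta>. y = (\<Sum>k<n. \<beta> k *\<^sub>R w k)"
proof -
  have inj: "inj_on w {..<n}"
  proof (rule inj_onI, rule ccontr)
    fix i j assume ij: "i \<in> {..<n}" "j \<in> {..<n}" "w i = w j" "i \<noteq> j"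
    define l where "l = (\<lambda>k. (if k = i then 1 else 0) - (if k = j then (1::real) else 0))"
    have "(\<Sum>k<n. l k *\<^sub>R w k) = 0" using ij unfolding l_def
      by (simp add: scaleR_diff_left sum_subtractf if_distrib[where f="\<lambda>a. a *\<^sub>R _"] cong: if_cong)
    then have "l i = 0" using ind ij by auto
    then show False using ij unfolding l_def by simp
  qed
  let ?W = "w ` {..<n}"
  have indW: "independent ?W"
  proof (rule real_vector.independent_if_scalars_zero)
    show "finite ?W" by simp
    fix f z assume A: "(\<Sum>x\<in>?W. f x *\<^sub>R x) = 0" "z \<in> ?W"
    have "(\<Sum>k<n. f (w k) *\<^sub>R w k) = 0" using A(1) sum.reindex[OF inj, of "\<lambda>x. f x *\<^sub>R x"] by simp
    then have "\<forall>k<n. f (w k) = 0" using ind[rule_format, of "\<lambda>k. f (w k)"] by blast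
    then show "f z = 0" using A(2) by auto
  qed
  have cW: "card ?W = n" using card_image[OF inj] by simp
  have "y \<in> span ?W"
  proof (rule ccontr)
    assume "y \<notin> span ?W"
    then have i2: "independent (insert y ?W)"
      using indW by (rule real_vector.independent_insertI)
    have yW: "y \<notin> ?W"
    proof
      assume "y \<in> ?W"
      then have "y \<in> span ?W" by (rule real_vector.span_base)
      with \<open>y \<notin> span ?W\<close> show False by simp
    qed
    have "finite (insert y ?W) \<and> card (insert y ?W) \<le> card B"
      using real_vector.independent_span_bound[OF B(1) i2] B(3) by simp
    then show False using cW yW B(4) by simp
  qed
  then obtain u where "y = (\<Sum>x\<in>?W. u x *\<^sub>R x)"
    using real_vector.span_finite[of ?W] by auto
  then have "y = (\<Sum>k<n. u (w k) *\<^sub>R w k)"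
    using sum.reindex[OF inj, of "\<lambda>x. u x *\<^sub>R x"] by simp
  then show ?thesis by (intro exI[of _ "\<lambda>k. u (w k)"])
qed

lemma in_hull:
  fixes x :: "nat \<Rightarrow> 'a::real_vector"
  assumes "\<forall>k<n. \<beta> k \<ge> 0" "(\<Sum>k<n. \<beta> k) \<le> 1"
  shows "x 0 + (\<Sum>k<n. \<beta> k *\<^sub>R (x (Suc k) - x 0)) \<in> convex hull (x ` {..n})"
proof -
  define u where "u = (\<lambda>k. case k of 0 \<Rightarrow> 1 - (\<Sum>k<n. \<beta> k) | Suc j \<Rightarrow> \<beta> j)"
  have "(\<Sum>i\<le>n. u i *\<^sub>R x i) \<in> convex hull (x ` {..n})"
  proof (rule convex_sum)
    show "(\<Sum>i\<le>n. u i) = 1" unfolding sum.atMost_shift u_def by simp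
    show "0 \<le> u i" if "i \<in> {..n}" for i
      using assms that unfolding u_def by (cases i) auto
    show "x i \<in> convex hull (x ` {..n})" if "i \<in> {..n}" for i
      using that by (simp add: hull_inc)
  qed (auto simp: convex_convex_hull)
  also have "(\<Sum>i\<le>n. u i *\<^sub>R x i) = x 0 + (\<Sum>k<n. \<beta> k *\<^sub>R (x (Suc k) - x 0))"
    unfolding sum.atMost_shift u_def
    by (simp add: scaleR_diff_right sum_subtractf scaleR_sum_left scaleR_diff_left algebra_simps)
  finally show ?thesis .
qed

lemma hull_coords:
  fixes a :: "nat \<Rightarrow> 'a::real_vector"
  assumes inj: "inj_on a {..n}" and y: "y \<in> convex hull (a ` {..n})"
  shows "\<exists>\<beta>. (\<forall>k<n. \<beta> k \<ge> 0) \<and> (\<Sum>k<n. \<beta> k) \<le> 1 \<and> y = a 0 + (\<Sum>k<n. \<beta> k *\<^sub>R (a (Suc k) - a 0))"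
proof -
  obtain U where U: "\<forall>z\<in>a ` {..n}. 0 \<le> U z" "sum U (a ` {..n}) = 1" "(\<Sum>z\<in>a ` {..n}. U z *\<^sub>R z) = y"
    using y convex_hull_finite[of "a ` {..n}"] by auto
  have s1: "(\<Sum>k\<le>n. U (a k)) = 1" using U(2) sum.reindex[OF inj, of U] by simp
  have s2: "(\<Sum>k\<le>n. U (a k) *\<^sub>R a k) = y" using U(3) sum.reindex[OF inj, of "\<lambda>z. U z *\<^sub>R z"] by simp
  define \<beta> where "\<beta> = (\<lambda>k. U (a (Suc k)))"
  have "\<forall>k<n. \<beta> k \<ge> 0" using U(1) unfolding \<beta>_def by auto
  moreover have "(\<Sum>k<n. \<beta> k) \<le> 1"
  proof -
    have "U (a 0) \<ge> 0" using U(1) by auto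
    then show ?thesis using s1 unfolding \<beta>_def sum.atMost_shift by linarith
  qed
  moreover have "y = a 0 + (\<Sum>k<n. \<beta> k *\<^sub>R (a (Suc k) - a 0))"
  proof -
    have u0: "U (a 0) = 1 - (\<Sum>k<n. \<beta> k)" using s1 unfolding \<beta>_def sum.atMost_shift by simp
    have "a 0 + (\<Sum>k<n. \<beta> k *\<^sub>R (a (Suc k) - a 0))
        = a 0 + (\<Sum>k<n. \<beta> k *\<^sub>R a (Suc k)) - (\<Sum>k<n. \<beta> k) *\<^sub>R a 0"
      by (simp add: scaleR_diff_right sum_subtractf scaleR_sum_left)
    also have "\<dots> = U (a 0) *\<^sub>R a 0 + (\<Sum>k<n. \<beta> k *\<^sub>R a (Suc k))"
      unfolding u0 by (simp add: scaleR_diff_left)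
    also have "\<dots> = y" using s2 unfolding sum.atMost_shift \<beta>_def by simp
    finally show ?thesis by simp
  qed
  ultimately show ?thesis by blast
qed
theorem corollary30:
  fixes n :: nat and a :: "nat \<Rightarrow> 'a::banach" and c :: 'a
  assumes dimX: "\<exists>B :: 'a set. finite B \<and> independent B \<and> span B = UNIV \<and> card B = n"
    and simplex: "aff_indep_family n a"
    and interior: "c \<in> interior (convex hull (a ` {..n}))"
  shows "\<exists>\<delta>>0. \<forall>x :: nat \<Rightarrow> 'a. (\<forall>k\<le>n. norm (x k - a k) < \<delta>) \<longrightarrow>
           aff_indep_family n x \<and> c \<in> interior (convex hull (x ` {..n}))"
proof -
  obtain B :: "'a set" where B: "finite B" "independent B" "span B = UNIV" "card B = n"
    using dimX by blast
  define v where "v = (\<lambda>k. a (Suc k) - a 0)"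
  have inja: "inj_on a {..n}" using simplex unfolding aff_indep_family_def by auto
  have indv: "\<forall>l. (\<Sum>k<n. l k *\<^sub>R v k) = 0 \<longrightarrow> (\<forall>k<n. l k = 0)"
    using simplex unfolding aff_indep_iff2 v_def .
  obtain e where e: "e > 0" "\<And>l. e * (\<Sum>k<n. \<bar>l k\<bar>) \<le> norm (\<Sum>k<n. l k *\<^sub>R v k)"
    using lower_bound[OF indv] by blast
  obtain r where r: "r > 0" "ball c r \<subseteq> convex hull (a ` {..n})"
    using interior mem_interior by blast
  have uniq: "\<forall>k<n. \<beta> k = \<beta>' k" if "(\<Sum>k<n. \<beta> k *\<^sub>R v k) = (\<Sum>k<n. \<beta>' k *\<^sub>R v k)" for \<beta> \<beta>'
  proof -
    from that have "(\<Sum>k<n. (\<beta> k - \<beta>' k) *\<^sub>R v k) = 0"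
      by (simp add: scaleR_diff_left sum_subtractf)
    then show ?thesis using indv[rule_format, of "\<lambda>k. \<beta> k - \<beta>' k"] by auto
  qed
  have coordsA: "\<exists>\<beta>. (\<forall>k<n. \<beta> k \<ge> 0) \<and> (\<Sum>k<n. \<beta> k) \<le> 1 \<and> y = a 0 + (\<Sum>k<n. \<beta> k *\<^sub>R v k)"
    if "y \<in> ball c r" for y
    using hull_coords[OF inja, of y] r(2) that unfolding v_def by blast
  obtain \<gamma> where \<gamma>: "\<forall>k<n. \<gamma> k \<ge> 0" "(\<Sum>k<n. \<gamma> k) \<le> 1" "c = a 0 + (\<Sum>k<n. \<gamma> k *\<^sub>R v k)"
    using coordsA[of c] r(1) by auto
  define T where "T = 1 + (\<Sum>k<n. norm (v k))"
  define t where "t = r / (2*T)"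
  have T1: "T \<ge> 1" by (simp add: T_def sum_nonneg)
  have tpos: "t > 0" using r(1) T1 by (simp add: t_def)
  have \<gamma>t: "\<gamma> j \<ge> t" if j: "j < n" for j
  proof -
    have "norm (v j) \<le> (\<Sum>k<n. norm (v k))" by (rule member_le_sum) (use j in auto)
    then have "norm (v j) \<le> T" unfolding T_def by simp
    then have "t * norm (v j) \<le> t * T" using tpos by (simp add: mult_left_mono)
    also have "t * T = r / 2" using T1 by (simp add: t_def)
    finally have tv: "t * norm (v j) < r" using r(1) by simp
    define y where "y = c - t *\<^sub>R v j"
    have "y \<in> ball c r" using tv tpos by (simp add: y_def dist_norm)
    then obtain \<beta> where \<beta>: "\<forall>k<n. \<beta> k \<ge> 0" "y = a 0 + (\<Sum>k<n. \<beta> k *\<^sub>R v k)"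
      using coordsA by blast
    have s: "(\<Sum>k<n. (if k = j then t else 0) *\<^sub>R v k) = t *\<^sub>R v j"
      using j by (simp add: if_distrib[where f="\<lambda>a. a *\<^sub>R _"] cong: if_cong)
    have "y = a 0 + (\<Sum>k<n. (\<gamma> k - (if k = j then t else 0)) *\<^sub>R v k)"
      unfolding scaleR_diff_left sum_subtractf s y_def using \<gamma>(3) by simp
    then have "(\<Sum>k<n. \<beta> k *\<^sub>R v k) = (\<Sum>k<n. (\<gamma> k - (if k = j then t else 0)) *\<^sub>R v k)"
      using \<beta>(2) by simp
    then have "\<forall>k<n. \<beta> k = \<gamma> k - (if k = j then t else 0)"
      by (rule uniq)
    then show ?thesis using \<beta>(1) j by force
  qed
  define s where "s = r / (2 * (1 + norm (c - a 0)))"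
  have spos: "s > 0" using r(1) by (simp add: s_def add_pos_nonneg)
  have sum\<gamma>: "(\<Sum>k<n. \<gamma> k) \<le> 1 - s / (1 + s)"
  proof -
    have "s * norm (c - a 0) < r"
    proof -
      have "s * norm (c - a 0) \<le> s * (1 + norm (c - a 0))" using spos by simp
      also have "\<dots> = r / 2"
      proof -
        have "1 + norm (c - a 0) > 0" by (simp add: add_pos_nonneg)
        then show ?thesis unfolding s_def by (simp add: field_simps)
      qed
      finally show ?thesis using r(1) by simp
    qed
    define y where "y = c + s *\<^sub>R (c - a 0)"
    have "y \<in> ball c r" using \<open>s * norm (c - a 0) < r\<close> spos by (simp add: y_def dist_norm)
    then obtain \<beta> where \<beta>: "(\<Sum>k<n. \<beta> k) \<le> 1" "y = a 0 + (\<Sum>k<n. \<beta> k *\<^sub>R v k)"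
      using coordsA by blast
    have "y = a 0 + (\<Sum>k<n. ((1 + s) * \<gamma> k) *\<^sub>R v k)"
    proof -
      have "y = a 0 + (1 + s) *\<^sub>R (c - a 0)" unfolding y_def by (simp add: algebra_simps)
      also have "(1 + s) *\<^sub>R (c - a 0) = (\<Sum>k<n. ((1 + s) * \<gamma> k) *\<^sub>R v k)"
        using \<gamma>(3) by (simp add: scaleR_sum_right)
      finally show ?thesis .
    qed
    then have "(\<Sum>k<n. \<beta> k *\<^sub>R v k) = (\<Sum>k<n. ((1 + s) * \<gamma> k) *\<^sub>R v k)"
      using \<beta>(2) by simp
    then have "\<forall>k<n. \<beta> k = (1 + s) * \<gamma> k" by (rule uniq)
    then have "(\<Sum>k<n. \<beta> k) = (1 + s) * (\<Sum>k<n. \<gamma> k)" by (simp add: sum_distrib_left)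
    then have "(1 + s) * (\<Sum>k<n. \<gamma> k) \<le> 1" using \<beta>(1) by simp
    then have "(\<Sum>k<n. \<gamma> k) \<le> 1 / (1 + s)" using spos by (simp add: field_simps)
    also have "1 / (1 + s) = 1 - s / (1 + s)" using spos by (simp add: field_simps)
    finally show ?thesis .
  qed
  define m where "m = min t (s / (1 + s))"
  have mpos: "m > 0" using tpos spos by (simp add: m_def)
  have m1: "m \<le> 1" using spos by (simp add: m_def min_le_iff_disj)
  have \<gamma>m: "\<gamma> k \<ge> m" if "k < n" for k using \<gamma>t[OF that] by (simp add: m_def min_le_iff_disj)
  have sum\<gamma>m: "(\<Sum>k<n. \<gamma> k) \<le> 1 - m" using sum\<gamma> by (simp add: m_def)
  define \<delta> where "\<delta> = e * m / 16"
  define \<rho> where "\<rho> = e * m / 8"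
  have \<delta>pos: "\<delta> > 0" using e(1) mpos by (simp add: \<delta>_def)
  have \<rho>pos: "\<rho> > 0" using e(1) mpos by (simp add: \<rho>_def)
  show ?thesis
  proof (rule exI[of _ \<delta>], intro conjI allI impI)
    show "\<delta> > 0" by (fact \<delta>pos)
  next
    fix x :: "nat \<Rightarrow> 'a"
    assume hx: "\<forall>k\<le>n. norm (x k - a k) < \<delta>"
    define w where "w = (\<lambda>k. x (Suc k) - x 0)"
    have wv: "norm (w k - v k) \<le> 2 * \<delta>" if "k < n" for k
    proof -
      have "w k - v k = (x (Suc k) - a (Suc k)) - (x 0 - a 0)" unfolding w_def v_def by simp
      then have "norm (w k - v k) \<le> norm (x (Suc k) - a (Suc k)) + norm (x 0 - a 0)"
        by (metis norm_triangle_ineq4)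
      moreover have "norm (x (Suc k) - a (Suc k)) < \<delta>" using hx that by simp
      moreover have "norm (x 0 - a 0) < \<delta>" using hx by simp
      ultimately show ?thesis by simp
    qed
    have sumdiff: "norm (\<Sum>k<n. l k *\<^sub>R (w k - v k)) \<le> 2 * \<delta> * (\<Sum>k<n. \<bar>l k\<bar>)" for l
    proof -
      have "norm (\<Sum>k<n. l k *\<^sub>R (w k - v k)) \<le> (\<Sum>k<n. norm (l k *\<^sub>R (w k - v k)))"
        by (rule norm_sum)
      also have "\<dots> \<le> (\<Sum>k<n. \<bar>l k\<bar> * (2 * \<delta>))"
        by (rule sum_mono) (simp add: mult_left_mono wv)
      finally show ?thesis by (simp add: sum_distrib_left sum_distrib_right mult.commute)
    qed
    have lbw: "(e / 2) * (\<Sum>k<n. \<bar>l k\<bar>) \<le> norm (\<Sum>k<n. l k *\<^sub>R w k)" for l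
    proof -
      have eq: "(\<Sum>k<n. l k *\<^sub>R w k) = (\<Sum>k<n. l k *\<^sub>R v k) + (\<Sum>k<n. l k *\<^sub>R (w k - v k))"
        by (simp add: scaleR_diff_right sum_subtractf)
      have "norm (\<Sum>k<n. l k *\<^sub>R v k) - norm (\<Sum>k<n. l k *\<^sub>R (w k - v k)) \<le> norm (\<Sum>k<n. l k *\<^sub>R w k)"
        unfolding eq by (rule norm_diff_ineq)
      moreover have "2 * \<delta> \<le> e / 2" using e(1) m1 by (simp add: \<delta>_def)
      moreover have "(\<Sum>k<n. \<bar>l k\<bar>) \<ge> 0" by (simp add: sum_nonneg)
      ultimately have "2 * \<delta> * (\<Sum>k<n. \<bar>l k\<bar>) \<le> e / 2 * (\<Sum>k<n. \<bar>l k\<bar>)"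
        by (intro mult_right_mono)
      then show ?thesis using e(2)[of l] sumdiff[of l] \<open>norm (\<Sum>k<n. l k *\<^sub>R v k) - _ \<le> _\<close>
        by linarith
    qed
    have indw: "\<forall>l. (\<Sum>k<n. l k *\<^sub>R w k) = 0 \<longrightarrow> (\<forall>k<n. l k = 0)"
    proof (rule allI, rule impI)
      fix l assume "(\<Sum>k<n. l k *\<^sub>R w k) = 0"
      then have "(e / 2) * (\<Sum>k<n. \<bar>l k\<bar>) \<le> 0" using lbw[of l] by simp
      then have "(\<Sum>k<n. \<bar>l k\<bar>) \<le> 0" using e(1) by (simp add: mult_le_0_iff)
      then have "(\<Sum>k<n. \<bar>l k\<bar>) = 0" by (simp add: antisym sum_nonneg)
      then show "\<forall>k<n. l k = 0" by (simp add: sum_nonneg_eq_0_iff)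
    qed
    then show "aff_indep_family n x" unfolding aff_indep_iff2 w_def .
    have "ball c \<rho> \<subseteq> convex hull (x ` {..n})"
    proof
      fix y assume "y \<in> ball c \<rho>"
      then have yc: "norm (y - c) < \<rho>" by (simp add: dist_norm norm_minus_commute)
      obtain \<beta> where \<beta>: "y - x 0 = (\<Sum>k<n. \<beta> k *\<^sub>R w k)"
        using coords[OF B indw] by blast
      define d where "d = (\<lambda>k. \<beta> k - \<gamma> k)"
      have deq: "(\<Sum>k<n. d k *\<^sub>R w k) = (y - c) + (a 0 - x 0) - (\<Sum>k<n. \<gamma> k *\<^sub>R (w k - v k))"
      proof -
        have "(\<Sum>k<n. d k *\<^sub>R w k) = (y - x 0) - (\<Sum>k<n. \<gamma> k *\<^sub>R w k)"
          unfolding d_def \<beta> by (simp add: scaleR_diff_left sum_subtractf)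
        also have "(\<Sum>k<n. \<gamma> k *\<^sub>R w k) = (c - a 0) + (\<Sum>k<n. \<gamma> k *\<^sub>R (w k - v k))"
          using \<gamma>(3) by (simp add: scaleR_diff_right sum_subtractf)
        finally show ?thesis by (simp add: algebra_simps)
      qed
      have "norm (\<Sum>k<n. d k *\<^sub>R w k) \<le> norm (y - c) + norm (a 0 - x 0) + norm (\<Sum>k<n. \<gamma> k *\<^sub>R (w k - v k))"
        unfolding deq
      proof -
        have "norm ((y - c) + (a 0 - x 0) - (\<Sum>k<n. \<gamma> k *\<^sub>R (w k - v k)))
              \<le> norm ((y - c) + (a 0 - x 0)) + norm (\<Sum>k<n. \<gamma> k *\<^sub>R (w k - v k))"
          by (rule norm_triangle_ineq4)
        moreover have "norm ((y - c) + (a 0 - x 0)) \<le> norm (y - c) + norm (a 0 - x 0)"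
          by (rule norm_triangle_ineq)
        ultimately show "norm ((y - c) + (a 0 - x 0) - (\<Sum>k<n. \<gamma> k *\<^sub>R (w k - v k)))
              \<le> norm (y - c) + norm (a 0 - x 0) + norm (\<Sum>k<n. \<gamma> k *\<^sub>R (w k - v k))" by linarith
      qed
      also have "\<dots> < \<rho> + \<delta> + 2 * \<delta> * 1"
      proof -
        have "norm (a 0 - x 0) < \<delta>" using hx by (simp add: norm_minus_commute)
        moreover have "(\<Sum>k<n. \<bar>\<gamma> k\<bar>) \<le> 1" using \<gamma>(1,2) by simp
        then have "2 * \<delta> * (\<Sum>k<n. \<bar>\<gamma> k\<bar>) \<le> 2 * \<delta> * 1" using \<delta>pos by (intro mult_left_mono) auto
        ultimately show ?thesis using yc sumdiff[of \<gamma>] by linarith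
      qed
      finally have "(e / 2) * (\<Sum>k<n. \<bar>d k\<bar>) < \<rho> + 3 * \<delta>" using lbw[of d] by linarith
      also have "\<rho> + 3 * \<delta> = (e / 2) * (5 * m / 8)" by (simp add: \<rho>_def \<delta>_def field_simps)
      finally have sd: "(\<Sum>k<n. \<bar>d k\<bar>) < 5 * m / 8" using e(1) by (simp add: mult_less_cancel_left_pos)
      have bpos: "\<forall>k<n. \<beta> k \<ge> 0"
      proof (intro allI impI)
        fix k assume k: "k < n"
        have "\<bar>d k\<bar> \<le> (\<Sum>k<n. \<bar>d k\<bar>)" by (rule member_le_sum) (use k in auto)
        then show "\<beta> k \<ge> 0" using sd \<gamma>m[OF k] mpos unfolding d_def by linarith
      qed
      have bsum: "(\<Sum>k<n. \<beta> k) \<le> 1"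
      proof -
        have "(\<Sum>k<n. \<beta> k) = (\<Sum>k<n. \<gamma> k) + (\<Sum>k<n. d k)" unfolding d_def by (simp add: sum_subtractf)
        also have "(\<Sum>k<n. d k) \<le> (\<Sum>k<n. \<bar>d k\<bar>)" by (rule sum_mono) simp
        finally show ?thesis using sd sum\<gamma>m mpos by linarith
      qed
      have "x 0 + (\<Sum>k<n. \<beta> k *\<^sub>R (x (Suc k) - x 0)) \<in> convex hull (x ` {..n})"
        by (rule in_hull) (use bpos bsum in auto)
      moreover have "y = x 0 + (\<Sum>k<n. \<beta> k *\<^sub>R (x (Suc k) - x 0))" using \<beta> unfolding w_def by (simp add: algebra_simps)
      ultimately show "y \<in> convex hull (x ` {..n})" by simp
    qed
    then show "c \<in> interior (convex hull (x ` {..n}))" using \<rho>pos mem_interior by blast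
  qed
qed

end
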